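(* Let $\rho=(a^b)$ be a partition of $n=ab$ with $a\ge 3$ and $b\ge 3$. Define \[ \alpha(\rho)=(a+1,a^{\,b-2},a-1),\quad \beta(\rho)=(a^{\,b-1},a-1,1), \] \[ \gamma_1(\rho)=(a+1,a^{\,b-3},(a-1)^2,1),\quad \gamma_2(\rho)=(a+1,a^{\,b-2},a-2,1) \] (parts reordered into nonincreasing order where necessary). Then $\alpha(\rho),\beta(\rho),\gamma_1(\rho),\gamma_2(\rho)$ form a $4$-clique in $G_n$. In particular, the edge $\alpha(\rho)\beta(\rho)$ is contained in a $3$-simplex of the clique complex $K_n=\mathrm{Cl}(G_n)$.
   Context: The partition graph $G_n$ has as vertices the integer partitions of $n$; two partitions are adjacent if one is obtained from the other by a single elementary unit transfer followed by reordering: decrease one part by $1$ and either increase a different part by $1$ or create a new part equal to $1$, then delete a part that became $0$ and sort in nonincreasing order (the result being different from the original). Exponent notation $a^k$ denotes $k$ parts equal to $a$. The clique complex $\mathrm{Cl}(G_n)$ is the simplicial complex whose simplices are the cliques of $G_n$. *)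

theory Defs
  imports Main
begin

definition is_partition :: "nat \<Rightarrow> nat list \<Rightarrow> bool" where
  "is_partition n p \<longleftrightarrow> sorted_wrt (\<ge>) p \<and> (\<forall>x\<in>set p. 0 < x) \<and> sum_list p = n"

text \<open>Elementary unit transfer: decrease part i by 1, and either increase a different
  part j (j < length p) by 1, or (j = length p) create a new part equal to 1;
  then delete zero parts and sort nonincreasingly.\<close>
definition transfer :: "nat list \<Rightarrow> nat \<Rightarrow> nat \<Rightarrow> nat list" where
  "transfer p i j =
     rev (sort (filter (\<lambda>x. x \<noteq> 0)
       (if j < length p then (p[i := p ! i - 1])[j := p ! j + 1]
        else p[i := p ! i - 1] @ [1])))"

definition elementary_move :: "nat list \<Rightarrow> nat list \<Rightarrow> bool" where
  "elementary_move p q \<longleftrightarrow>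
     (\<exists>i < length p. \<exists>j \<le> length p. j \<noteq> i \<and> q = transfer p i j \<and> q \<noteq> p)"

definition partition_adj :: "nat \<Rightarrow> nat list \<Rightarrow> nat list \<Rightarrow> bool" where
  "partition_adj n p q \<longleftrightarrow> is_partition n p \<and> is_partition n q \<and>
     (elementary_move p q \<or> elementary_move q p)"

definition is_clique :: "nat \<Rightarrow> nat list set \<Rightarrow> bool" where
  "is_clique n S \<longleftrightarrow> S \<subseteq> {p. is_partition n p} \<and>
     (\<forall>p\<in>S. \<forall>q\<in>S. p \<noteq> q \<longrightarrow> partition_adj n p q)"

definition clique_complex_simplex :: "nat \<Rightarrow> nat \<Rightarrow> nat list set \<Rightarrow> bool" where
  "clique_complex_simplex n k \<sigma> \<longleftrightarrow> finite \<sigma> \<and> card \<sigma> = k + 1 \<and> is_clique n \<sigma>"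

end

theory Submission
  imports Defs "HOL-Library.Multiset"
begin

lemma sorted_rep[simp]: "sorted_wrt (\<ge>) (replicate k (x::nat))"
  by (induct k) auto

lemma rev_sort_eq:
  assumes "mset l = mset q" "sorted_wrt (\<ge>) q"
  shows "rev (sort l) = q"
proof -
  have "sort l = rev q"
    using assms by (intro properties_for_sort) (simp_all add: sorted_wrt_rev)
  then show ?thesis by simp
qed

lemma move_intro:
  assumes "i < length p" "j \<le> length p" "j \<noteq> i" "q \<noteq> p"
    "mset (filter (\<lambda>x. x \<noteq> 0) (if j < length p then (p[i := p ! i - 1])[j := p ! j + 1]
        else p[i := p ! i - 1] @ [1])) = mset q"
    "sorted_wrt (\<ge>) q"
  shows "elementary_move p q"
  unfolding elementary_move_def transfer_def
  using assms rev_sort_eq by metis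

theorem proposition3p7:
  fixes a b :: nat
  assumes "a \<ge> 3" and "b \<ge> 3"
  defines "\<alpha> \<equiv> (a + 1) # replicate (b - 2) a @ [a - 1]"
      and "\<beta> \<equiv> replicate (b - 1) a @ [a - 1, 1]"
      and "\<gamma>1 \<equiv> (a + 1) # replicate (b - 3) a @ [a - 1, a - 1, 1]"
      and "\<gamma>2 \<equiv> (a + 1) # replicate (b - 2) a @ [a - 2, 1]"
  shows "card {\<alpha>, \<beta>, \<gamma>1, \<gamma>2} = 4 \<and> is_clique (a * b) {\<alpha>, \<beta>, \<gamma>1, \<gamma>2}
         \<and> (\<exists>\<sigma>. clique_complex_simplex (a * b) 3 \<sigma> \<and> \<alpha> \<in> \<sigma> \<and> \<beta> \<in> \<sigma>)"
proof -
  obtain c where c: "a = c + 3" using assms(1) by (metis add.commute le_Suc_ex)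
  obtain k where k: "b = k + 3" using assms(2) by (metis add.commute le_Suc_ex)
  have A: "\<alpha> = (c+4) # (c+3) # replicate k (c+3) @ [c+2]"
    unfolding \<alpha>_def c k by (simp add: numeral_eq_Suc)
  have B: "\<beta> = (c+3) # (c+3) # replicate k (c+3) @ [c+2, 1]"
    unfolding \<beta>_def c k by (simp add: numeral_eq_Suc)
  have G1: "\<gamma>1 = (c+4) # replicate k (c+3) @ [c+2, c+2, 1]"
    unfolding \<gamma>1_def c k by (simp add: numeral_eq_Suc)
  have G2: "\<gamma>2 = (c+4) # (c+3) # replicate k (c+3) @ [c+1, 1]"
    unfolding \<gamma>2_def c k by (simp add: numeral_eq_Suc)
  have n: "a * b = (c+3)*(k+3)" using c k by simp
  have pA: "is_partition (a*b) \<alpha>" unfolding n A is_partition_def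
    by (auto simp: sorted_wrt_append algebra_simps sum_list_replicate)
  have pB: "is_partition (a*b) \<beta>" unfolding n B is_partition_def
    by (auto simp: sorted_wrt_append algebra_simps sum_list_replicate)
  have pG1: "is_partition (a*b) \<gamma>1" unfolding n G1 is_partition_def
    by (auto simp: sorted_wrt_append algebra_simps sum_list_replicate)
  have pG2: "is_partition (a*b) \<gamma>2" unfolding n G2 is_partition_def
    by (auto simp: sorted_wrt_append algebra_simps sum_list_replicate)
  have d: "\<alpha> \<noteq> \<beta>" "\<alpha> \<noteq> \<gamma>1" "\<alpha> \<noteq> \<gamma>2" "\<beta> \<noteq> \<gamma>1" "\<beta> \<noteq> \<gamma>2" "\<gamma>1 \<noteq> \<gamma>2"
    unfolding A B G1 G2
    by (auto dest: arg_cong[where f=length] arg_cong[where f=last] arg_cong[where f=butlast]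
          arg_cong[where f=hd] arg_cong[where f="\<lambda>l. last (butlast l)"])
  have mAB: "elementary_move \<alpha> \<beta>"
    by (rule move_intro[where i=0 and j="length \<alpha>"]) (use d in \<open>auto simp: A B sorted_wrt_append\<close>)
  have mAG1: "elementary_move \<alpha> \<gamma>1"
    by (rule move_intro[where i=1 and j="length \<alpha>"]) (use d in \<open>auto simp: A G1 sorted_wrt_append\<close>)
  have mAG2: "elementary_move \<alpha> \<gamma>2"
    by (rule move_intro[where i="k+2" and j="length \<alpha>"]) (use d in \<open>auto simp: A G2 sorted_wrt_append list_update_append nth_append\<close>)
  have mBG1: "elementary_move \<beta> \<gamma>1"
    by (rule move_intro[where i=1 and j=0]) (use d in \<open>auto simp: B G1 sorted_wrt_append\<close>)
  have mBG2: "elementary_move \<beta> \<gamma>2"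
    by (rule move_intro[where i="k+2" and j=0]) (use d in \<open>auto simp: B G2 sorted_wrt_append list_update_append nth_append\<close>)
  have mG12: "elementary_move \<gamma>1 \<gamma>2"
    by (rule move_intro[where i="k+2" and j="k+1"]) (use d in \<open>auto simp: G1 G2 sorted_wrt_append list_update_append nth_append\<close>)
  have card: "card {\<alpha>, \<beta>, \<gamma>1, \<gamma>2} = 4" using d by simp
  have cl: "is_clique (a * b) {\<alpha>, \<beta>, \<gamma>1, \<gamma>2}"
    unfolding is_clique_def partition_adj_def
    using pA pB pG1 pG2 mAB mAG1 mAG2 mBG1 mBG2 mG12 by auto
  show ?thesis using card cl unfolding clique_complex_simplex_def
    by (intro conjI exI[of _ "{\<alpha>, \<beta>, \<gamma>1, \<gamma>2}"]) auto
qed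

end
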